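(* Let $\mathfrak{n}=\mathfrak{v}\oplus\mathfrak{z}$ be a fat (non-singular) 2-step nilpotent real Lie algebra with center $\mathfrak{z}$, and let $G(\mathfrak{n})$ be its group of graded automorphisms $\begin{pmatrix} a&0\\0&b\end{pmatrix}$, $a\in SL(\mathfrak{v})$, $b\in GL(\mathfrak{z})$, $b([u,v])=[au,av]$ for all $u,v\in\mathfrak{v}$. Then there is a positive definite inner product on $\mathfrak{z}$ that is invariant under (the action on $\mathfrak{z}$ of) $G(\mathfrak{n})$, i.e. every $b$ occurring in an element of $G(\mathfrak{n})$ is orthogonal for it.
   Context: A 2-step nilpotent real Lie algebra $\mathfrak{n}$ with center $\mathfrak{z}$ is written $\mathfrak{n}=\mathfrak{v}\oplus\mathfrak{z}$ with $\mathfrak{v}\cong\mathfrak{n}/\mathfrak{z}$; its structure is encoded by an antisymmetric bilinear map $[\ ,\ ]:\mathfrak{v}\times\mathfrak{v}\to\mathfrak{z}$. It is called fat (non-singular) if for every nonzero $\lambda\in\mathfrak{z}^*$ the 2-form $(u,v)\mapsto\lambda([u,v])$ on $\mathfrak{v}$ is non-degenerate (equivalently, $\operatorname{ad}x:\mathfrak{n}\to\mathfrak{z}$ is onto for every $x\notin\mathfrak{z}$). *)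

theory Defs
  imports "HOL-Analysis.Analysis"
begin

text \<open>A 2-step nilpotent real Lie algebra n = v + z, with v = real^'n and
  z = real^'m, is encoded by its bracket B : v x v -> z (bilinear, antisymmetric).\<close>

definition two_step_bracket :: "(real^'n \<Rightarrow> real^'n \<Rightarrow> real^'m) \<Rightarrow> bool" where
  "two_step_bracket B \<longleftrightarrow> bilinear B \<and> (\<forall>u v. B u v = - B v u)"

definition fat :: "(real^'n \<Rightarrow> real^'n \<Rightarrow> real^'m) \<Rightarrow> bool" where
  "fat B \<longleftrightarrow> (\<forall>l :: real^'m \<Rightarrow> real. linear l \<and> l \<noteq> (\<lambda>_. 0) \<longrightarrow>
      (\<forall>u. (\<forall>v. l (B u v) = 0) \<longrightarrow> u = 0))"

definition graded_aut :: "(real^'n \<Rightarrow> real^'n \<Rightarrow> real^'m) \<Rightarrow>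
    (real^'n \<Rightarrow> real^'n) \<Rightarrow> (real^'m \<Rightarrow> real^'m) \<Rightarrow> bool" where
  "graded_aut B a b \<longleftrightarrow> linear a \<and> det (matrix a) = 1 \<and> linear b \<and> bij b \<and>
      (\<forall>u v. b (B u v) = B (a u) (a v))"

definition pos_def_inner :: "(real^'m \<Rightarrow> real^'m \<Rightarrow> real) \<Rightarrow> bool" where
  "pos_def_inner Q \<longleftrightarrow> bilinear Q \<and> (\<forall>x y. Q x y = Q y x) \<and> (\<forall>x. x \<noteq> 0 \<longrightarrow> Q x x > 0)"

end

theory Submission
  imports Defs
begin

lemma det_scale: "det (c *\<^sub>R (A::real^'n^'n)) = c ^ CARD('n) * det A"
  unfolding det_def by (simp add: prod.distrib sum_distrib_left mult_ac)

definition Mf :: "(real^'n \<Rightarrow> real^'n \<Rightarrow> real^'m) \<Rightarrow> real^'m \<Rightarrow> real^'n^'n" where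
  "Mf B l = (\<chi> i j. l \<bullet> B (axis i 1) (axis j 1))"

lemma bilin_expand:
  assumes "bilinear B"
  shows "l \<bullet> B u v = (\<Sum>i\<in>UNIV. \<Sum>j\<in>UNIV. u$i * v$j * (Mf B l $ i $ j))"
proof -
  have "B u v = B (\<Sum>i\<in>UNIV. u$i *\<^sub>R axis i 1) (\<Sum>j\<in>UNIV. v$j *\<^sub>R axis j 1)"
    using basis_expansion[of u] basis_expansion[of v] by (simp add: scalar_mult_eq_scaleR)
  also have "\<dots> = (\<Sum>(i,j)\<in>UNIV \<times> UNIV. B (u$i *\<^sub>R axis i 1) (v$j *\<^sub>R axis j 1))"
    by (rule bilinear_sum[OF assms])
  also have "\<dots> = (\<Sum>(i,j)\<in>UNIV \<times> UNIV. (u$i * v$j) *\<^sub>R B (axis i 1) (axis j 1))"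
    by (simp add: bilinear_lmul[OF assms] bilinear_rmul[OF assms] mult.commute)
  finally have "l \<bullet> B u v = (\<Sum>(i,j)\<in>UNIV \<times> UNIV. u$i * v$j * (l \<bullet> B (axis i 1) (axis j 1)))"
    by (simp add: inner_sum_right case_prod_unfold)
  then show ?thesis
    by (simp add: Mf_def sum.cartesian_product)
qed

lemma Mf_aut:
  assumes "bilinear B" "graded_aut B a b"
  shows "Mf B (adjoint b l) = transpose (matrix a) ** Mf B l ** matrix a"
proof -
  have la: "linear a" and lb: "linear b" and hb: "\<And>u v. b (B u v) = B (a u) (a v)"
    using assms(2) by (auto simp: graded_aut_def)
  have "Mf B (adjoint b l) $ i $ j = (transpose (matrix a) ** Mf B l ** matrix a) $ i $ j" for i j
  proof -
    have "Mf B (adjoint b l) $ i $ j = l \<bullet> b (B (axis i 1) (axis j 1))"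
      unfolding Mf_def using adjoint_works[OF lb, of "B (axis i 1) (axis j 1)" l] by (simp add: inner_commute)
    also have "\<dots> = l \<bullet> B (a (axis i 1)) (a (axis j 1))" by (simp add: hb)
    also have "\<dots> = (\<Sum>k\<in>UNIV. \<Sum>m\<in>UNIV. matrix a $ k $ i * matrix a $ m $ j * (Mf B l $ k $ m))"
      by (simp add: bilin_expand[OF assms(1)] matrix_def)
    also have "\<dots> = (\<Sum>m\<in>UNIV. \<Sum>k\<in>UNIV. matrix a $ k $ i * Mf B l $ k $ m * matrix a $ m $ j)"
      by (subst sum.swap) (simp add: mult_ac)
    also have "\<dots> = (transpose (matrix a) ** Mf B l ** matrix a) $ i $ j"
      unfolding matrix_matrix_mult_def transpose_def by (simp add: sum_distrib_right)
    finally show ?thesis .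
  qed
  then show ?thesis by (simp add: vec_eq_iff)
qed

lemma Mf_scale: "Mf B (t *\<^sub>R l) = t *\<^sub>R Mf B l"
  by (simp add: Mf_def vec_eq_iff)

lemma F_hom: "\<bar>det (Mf B (t *\<^sub>R l))\<bar> = \<bar>t\<bar> ^ CARD('n) * \<bar>det (Mf B l :: real^'n^'n)\<bar>"
  by (simp add: Mf_scale det_scale abs_mult power_abs)

lemma F_aut:
  assumes "bilinear B" "graded_aut B a b"
  shows "\<bar>det (Mf B (adjoint b l))\<bar> = \<bar>det (Mf B l)\<bar>"
proof -
  have "det (matrix a) = 1" using assms(2) by (simp add: graded_aut_def)
  then show ?thesis by (simp add: Mf_aut[OF assms] det_mul)
qed

lemma F_cont: "continuous_on UNIV (\<lambda>l. \<bar>det (Mf B l :: real^'n^'n)\<bar>)"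
  unfolding det_def Mf_def by (simp; intro continuous_intros)

lemma F_pos:
  assumes "two_step_bracket B" "fat B" "l \<noteq> 0"
  shows "\<bar>det (Mf B l)\<bar> > 0"
proof (rule ccontr)
  assume "\<not> ?thesis"
  then have d0: "det (Mf B l) = 0" by simp
  let ?M = "Mf B l"
  have bil: "bilinear B" and anti: "\<And>u v. B u v = - B v u"
    using assms(1) unfolding two_step_bracket_def by blast+
  have "det (matrix ((*v) ?M)) \<noteq> 0 \<longleftrightarrow> inj ((*v) ?M)"
    by (rule det_nz_iff_inj[OF matrix_vector_mul_linear])
  then have "\<not> inj ((*v) ?M)" using d0 by simp
  then obtain x y where "x \<noteq> y" "?M *v x = ?M *v y" unfolding inj_def by blast
  define z where "z = x - y"
  have z0: "z \<noteq> 0" using \<open>x \<noteq> y\<close> by (simp add: z_def)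
  have Mz: "?M *v z = 0" using \<open>?M *v x = ?M *v y\<close> by (simp add: z_def matrix_vector_mult_diff_distrib)
  have Mzi: "(\<Sum>j\<in>UNIV. ?M $ i $ j * z $ j) = 0" for i
  proof -
    have "(?M *v z) $ i = 0" using Mz by simp
    then show ?thesis by (simp add: matrix_vector_mult_def)
  qed
  have lz: "l \<bullet> B u z = 0" for u
  proof -
    have "l \<bullet> B u z = (\<Sum>i\<in>UNIV. \<Sum>j\<in>UNIV. u $ i * z $ j * ?M $ i $ j)"
      by (rule bilin_expand[OF bil])
    also have "\<dots> = (\<Sum>i\<in>UNIV. u $ i * (\<Sum>j\<in>UNIV. ?M $ i $ j * z $ j))"
    proof (rule sum.cong[OF refl])
      fix i
      show "(\<Sum>j\<in>UNIV. u $ i * z $ j * ?M $ i $ j) = u $ i * (\<Sum>j\<in>UNIV. ?M $ i $ j * z $ j)"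
        unfolding sum_distrib_left by (rule sum.cong[OF refl]) simp
    qed
    also have "\<dots> = 0" by (simp add: Mzi)
    finally show ?thesis .
  qed
  have zv: "\<forall>v. l \<bullet> B z v = 0"
  proof
    fix v
    have "B z v = - B v z" by (rule anti)
    then show "l \<bullet> B z v = 0" using lz[of v] by simp
  qed
  have lin: "linear (\<lambda>w. l \<bullet> w)"
    by (rule linearI) (simp_all add: inner_add_right)
  have ne: "(\<lambda>w. l \<bullet> w) \<noteq> (\<lambda>_. 0)"
  proof
    assume "(\<lambda>w. l \<bullet> w) = (\<lambda>_. 0)"
    then have "(\<lambda>w. l \<bullet> w) l = (\<lambda>_. 0::real) l" by (rule arg_cong)
    then have "l \<bullet> l = 0" by simp
    then show False using assms(3) by simp
  qed
  have sp: "linear (\<lambda>w. l \<bullet> w) \<and> (\<lambda>w. l \<bullet> w) \<noteq> (\<lambda>_. 0) \<longrightarrow>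
      (\<forall>u. (\<forall>v. l \<bullet> B u v = 0) \<longrightarrow> u = 0)"
    using spec[OF assms(2)[unfolded fat_def], of "\<lambda>w. l \<bullet> w"] by simp
  have "z = 0" using sp lin ne zv by blast
  then show False using z0 by simp
qed

lemma F_zero: "\<bar>det (Mf B 0 :: real^'n^'n)\<bar> = 0"
proof -
  have c: "CARD('n) > 0" by simp
  have "Mf B 0 = (0::real) *\<^sub>R (Mf B 0 :: real^'n^'n)" by (simp add: Mf_def vec_eq_iff)
  then have "det (Mf B 0 :: real^'n^'n) = det ((0::real) *\<^sub>R (Mf B 0 :: real^'n^'n))" by metis
  also have "\<dots> = 0 ^ CARD('n) * det (Mf B 0 :: real^'n^'n)" by (rule det_scale)
  also have "\<dots> = 0" using c by simp
  finally show ?thesis by simp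
qed
lemma cont_abs_int:
  fixes f :: "'a::euclidean_space \<Rightarrow> 'b::euclidean_space"
  assumes "compact S" "continuous_on S f"
  shows "f absolutely_integrable_on S"
proof -
  have "integrable lborel (\<lambda>x. indicator S x *\<^sub>R f x)"
    by (rule borel_integrable_compact[OF assms])
  then show ?thesis
    by (simp add: set_integrable_def integrable_completion borel_measurable_integrable)
qed

lemma cont_int:
  fixes f :: "'a::euclidean_space \<Rightarrow> real"
  assumes "compact S" "continuous_on UNIV f"
  shows "f integrable_on S"
  using cont_abs_int[OF assms(1) continuous_on_subset[OF assms(2)]]
  by (simp add: absolutely_integrable_on_def)

lemma integral_pos:
  fixes h :: "'a::euclidean_space \<Rightarrow> real"
  assumes hc: "continuous_on UNIV h" and K: "compact K" and h0: "\<forall>x\<in>K. 0 \<le> h x"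
    and U: "open U" "U \<subseteq> K" "z \<in> U" and hz: "h z > 0"
  shows "integral K h > 0"
proof -
  define V where "V = U \<inter> {x. h z / 2 < h x}"
  have "open V" unfolding V_def
    by (intro open_Int U open_Collect_less continuous_intros hc)
  moreover have "z \<in> V" using U hz by (simp add: V_def)
  ultimately obtain a b where ab: "cbox a b \<subseteq> V" "\<forall>i\<in>Basis. a \<bullet> i < b \<bullet> i"
    by (meson open_contains_cbox)
  have c0: "Henstock_Kurzweil_Integration.content (cbox a b) > 0" using ab(2) by (rule content_pos_lt)
  have ic: "h integrable_on cbox a b"
    by (rule integrable_continuous[OF continuous_on_subset[OF hc]]) simp
  have "Henstock_Kurzweil_Integration.content (cbox a b) * (h z / 2) = integral (cbox a b) (\<lambda>_. h z / 2)" by simp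
  also have "\<dots> \<le> integral (cbox a b) h"
  proof (rule integral_le)
    show "(\<lambda>_. h z / 2) integrable_on cbox a b" by (rule integrable_const)
    show "h integrable_on cbox a b" by (rule ic)
    show "h z / 2 \<le> h x" if "x \<in> cbox a b" for x
      using that ab(1) unfolding V_def by auto
  qed
  also have "\<dots> \<le> integral K h"
  proof (rule integral_subset_le)
    show "cbox a b \<subseteq> K" using ab(1) U(2) unfolding V_def by blast
    show "h integrable_on cbox a b" by (rule ic)
    show "h integrable_on K" by (rule cont_int[OF K hc])
    show "\<forall>x\<in>K. 0 \<le> h x" by (rule h0)
  qed
  finally have "Henstock_Kurzweil_Integration.content (cbox a b) * (h z / 2) \<le> integral K h" .
  moreover have "Henstock_Kurzweil_Integration.content (cbox a b) * (h z / 2) > 0"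
    using c0 hz by simp
  ultimately show ?thesis by linarith
qed

lemma int_scaleR: "f integrable_on S \<Longrightarrow> integral S (\<lambda>x. f x *\<^sub>R c) = integral S f *\<^sub>R c"
  by (rule integral_unique[OF has_integral_scaleR_left[OF integrable_integral]])


lemma Q_lin_left:
  fixes K :: "'a::euclidean_space set"
  assumes "compact K"
  shows "linear (\<lambda>x. integral K (\<lambda>\<xi>. (x \<bullet> \<xi>) * (y \<bullet> \<xi>)))"
proof (rule linearI)
  fix x1 x2 :: 'a
  have i1: "(\<lambda>\<xi>. (x1 \<bullet> \<xi>) * (y \<bullet> \<xi>)) integrable_on K"
    by (rule cont_int[OF assms]) (intro continuous_intros)
  have i2: "(\<lambda>\<xi>. (x2 \<bullet> \<xi>) * (y \<bullet> \<xi>)) integrable_on K"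
    by (rule cont_int[OF assms]) (intro continuous_intros)
  have "integral K (\<lambda>\<xi>. ((x1 + x2) \<bullet> \<xi>) * (y \<bullet> \<xi>))
      = integral K (\<lambda>\<xi>. (x1 \<bullet> \<xi>) * (y \<bullet> \<xi>) + (x2 \<bullet> \<xi>) * (y \<bullet> \<xi>))"
    by (simp add: inner_add_left distrib_right)
  also have "\<dots> = integral K (\<lambda>\<xi>. (x1 \<bullet> \<xi>) * (y \<bullet> \<xi>)) + integral K (\<lambda>\<xi>. (x2 \<bullet> \<xi>) * (y \<bullet> \<xi>))"
    by (rule integral_add[OF i1 i2])
  finally show "integral K (\<lambda>\<xi>. ((x1 + x2) \<bullet> \<xi>) * (y \<bullet> \<xi>))
      = integral K (\<lambda>\<xi>. (x1 \<bullet> \<xi>) * (y \<bullet> \<xi>)) + integral K (\<lambda>\<xi>. (x2 \<bullet> \<xi>) * (y \<bullet> \<xi>))" .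
next
  fix r :: real and x :: 'a
  show "integral K (\<lambda>\<xi>. ((r *\<^sub>R x) \<bullet> \<xi>) * (y \<bullet> \<xi>)) = r *\<^sub>R integral K (\<lambda>\<xi>. (x \<bullet> \<xi>) * (y \<bullet> \<xi>))"
    by (simp add: mult.assoc)
qed

lemma cov_inv:
  fixes c :: "real^'m::{finite,wellorder} \<Rightarrow> real^'m::{finite,wellorder}"
    and g :: "real^'m::{finite,wellorder} \<Rightarrow> real" and K :: "(real^'m::{finite,wellorder}) set"
  assumes lc: "linear c" and cK: "c ` K = K" and K: "compact K" and gc: "continuous_on UNIV g"
  shows "integral K g = \<bar>det (matrix c)\<bar> * integral K (g \<circ> c)"
proof -
  define f where "f = (\<lambda>\<xi>. g \<xi> *\<^sub>R (1::real^1))"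
  have fc: "continuous_on K f" unfolding f_def
    by (intro continuous_intros continuous_on_subset[OF gc]) simp
  have "f absolutely_integrable_on (c ` K)" unfolding cK by (rule cont_abs_int[OF K fc])
  then have eq: "integral (c ` K) f = \<bar>det (matrix c)\<bar> *\<^sub>R integral K (f \<circ> c)"
    by (intro integral_change_of_variables_linear[OF lc]) simp
  have gK: "g integrable_on K" by (rule cont_int[OF K gc])
  have ccont: "continuous_on UNIV c"
    using lc by (simp add: linear_continuous_on linear_conv_bounded_linear)
  have gcK: "(g \<circ> c) integrable_on K"
    by (rule cont_int[OF K]) (rule continuous_on_compose[OF ccont continuous_on_subset[OF gc]], simp)
  have "integral K f = integral K g *\<^sub>R (1::real^1)"
    unfolding f_def by (rule int_scaleR[OF gK])
  moreover have "integral K (f \<circ> c) = integral K (g \<circ> c) *\<^sub>R (1::real^1)"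
    using int_scaleR[OF gcK, of "1::real^1"] by (simp add: f_def o_def)
  ultimately have "integral K g *\<^sub>R (1::real^1) = (\<bar>det (matrix c)\<bar> * integral K (g \<circ> c)) *\<^sub>R (1::real^1)"
    using eq cK by simp
  then show ?thesis
    by (metis (no_types, lifting) scaleR_cancel_right one_neq_zero)
qed

theorem main_wo:
  fixes B :: "real^'n \<Rightarrow> real^'n \<Rightarrow> real^'m::{finite,wellorder}"
  assumes tsb: "two_step_bracket B" and ft: "fat B"
  shows "\<exists>Q. pos_def_inner Q \<and>
           (\<forall>a b. graded_aut B a b \<longrightarrow> (\<forall>x y. Q (b x) (b y) = Q x y))"
proof -
  have bil: "bilinear B" using tsb by (simp add: two_step_bracket_def)
  define F where "F = (\<lambda>l::real^'m::{finite,wellorder}. \<bar>det (Mf B l :: real^'n^'n)\<bar>)"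
  have Fc: "continuous_on UNIV F" unfolding F_def by (rule F_cont)
  define K where "K = {l. F l \<le> 1}"
  have closedK: "closed K" unfolding K_def
    by (intro closed_Collect_le Fc continuous_on_const)
  have sph: "sphere (0::real^'m::{finite,wellorder}) 1 \<noteq> {}"
  proof -
    have "axis undefined (1::real) \<in> sphere (0::real^'m::{finite,wellorder}) 1" by simp
    then show ?thesis by blast
  qed
  obtain x0 where x0: "x0 \<in> sphere 0 1" "\<forall>y\<in>sphere 0 1. F x0 \<le> F y"
    using continuous_attains_inf[OF compact_sphere sph continuous_on_subset[OF Fc]] by auto
  define m where "m = F x0"
  have "x0 \<noteq> 0" using x0(1) by auto
  then have m0: "m > 0" unfolding m_def F_def by (rule F_pos[OF tsb ft])
  have N1: "CARD('n) \<ge> 1" by (simp add: Suc_leI)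
  have bnd: "norm l \<le> max 1 (1/m)" if "l \<in> K" for l
  proof (cases "norm l \<le> 1")
    case True then show ?thesis by simp
  next
    case False
    then have nl: "norm l > 1" by simp
    define u where "u = (1 / norm l) *\<^sub>R l"
    have l0: "l \<noteq> 0" using nl by (metis norm_zero not_one_less_zero)
    have "norm u = 1" using l0 by (simp add: u_def)
    then have Fu: "m \<le> F u" using x0(2) by (simp add: m_def)
    have "l = norm l *\<^sub>R u" using l0 by (simp add: u_def)
    then have "F l = norm l ^ CARD('n) * F u"
      unfolding F_def by (metis F_hom abs_norm_cancel)
    moreover have "F l \<le> 1" using that by (simp add: K_def)
    ultimately have "norm l ^ CARD('n) * m \<le> 1"
      using Fu by (smt (verit) mult_left_mono zero_le_power norm_ge_zero)
    moreover have "norm l \<le> norm l ^ CARD('n)"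
      using power_increasing[OF N1, of "norm l"] nl by simp
    ultimately have "norm l * m \<le> 1"
      using m0 by (smt (verit) mult_right_mono)
    then have "norm l \<le> 1 / m" using m0 by (simp add: pos_le_divide_eq)
    then show ?thesis by simp
  qed
  have compK: "compact K"
    using closedK bnd by (metis bounded_iff compact_eq_bounded_closed)
  have "open {l. F l < 1}" by (intro open_Collect_less Fc continuous_on_const)
  moreover have "(0::real^'m::{finite,wellorder}) \<in> {l. F l < 1}" using F_zero[of B] by (simp add: F_def)
  ultimately obtain r where r: "r > 0" "ball (0::real^'m::{finite,wellorder}) r \<subseteq> {l. F l < 1}"
    by (meson open_contains_ball)
  then have ballK: "ball 0 r \<subseteq> K" unfolding K_def by auto
  define Q where "Q = (\<lambda>x y. integral K (\<lambda>\<xi>. (x \<bullet> \<xi>) * (y \<bullet> \<xi>)))"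
  have Qsym: "Q x y = Q y x" for x y unfolding Q_def by (simp add: mult.commute)
  have pd: "pos_def_inner Q"
    unfolding pos_def_inner_def
  proof (intro conjI allI impI)
    show "bilinear Q" unfolding bilinear_def
    proof (intro allI conjI)
      fix y
      show "linear (\<lambda>x. Q x y)" unfolding Q_def by (rule Q_lin_left[OF compK])
      fix x
      have e: "(\<lambda>y. Q x y) = (\<lambda>y. Q y x)" by (rule ext) (rule Qsym)
      have "linear (\<lambda>y. Q y x)" unfolding Q_def by (rule Q_lin_left[OF compK])
      then show "linear (\<lambda>y. Q x y)" unfolding e .
    qed
    fix x y show "Q x y = Q y x" by (rule Qsym)
  next
    fix x :: "real^'m::{finite,wellorder}" assume "x \<noteq> 0"
    then have nx: "norm x > 0" by simp
    define z where "z = (r / 2 / norm x) *\<^sub>R x"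
    have "norm z = r / 2" using nx r(1) by (simp add: z_def)
    then have zb: "z \<in> ball 0 r" using r(1) by simp
    have rx: "r / 2 * norm x > 0" using nx r(1) by (intro mult_pos_pos) simp_all
    have "x \<bullet> z = r / 2 * norm x"
      using nx by (simp add: z_def power2_norm_eq_inner[symmetric] power2_eq_square)
    then have "x \<bullet> z > 0" using rx by linarith
    then have xz: "(x \<bullet> z) * (x \<bullet> z) > 0" using mult_pos_pos by blast
    show "Q x x > 0" unfolding Q_def
      by (rule integral_pos[where h="\<lambda>\<xi>. (x \<bullet> \<xi>) * (x \<bullet> \<xi>)", OF _ compK _ open_ball ballK zb xz])
        (intro continuous_intros, simp)
  qed
  have inv: "\<forall>x y. Q (b x) (b y) = Q x y" if ga: "graded_aut B a b" for a b
  proof -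
    have lb: "linear b" and bb: "bij b" using ga by (auto simp: graded_aut_def)
    define c where "c = adjoint b"
    have lc: "linear c" unfolding c_def by (rule adjoint_linear[OF lb])
    have adj: "x \<bullet> c \<xi> = b x \<bullet> \<xi>" for x \<xi> unfolding c_def by (rule adjoint_works[OF lb])
    have ic: "inj c"
    proof (rule linear_injective_0[OF lc, THEN iffD2], intro allI impI)
      fix l assume "c l = 0"
      obtain x where "b x = l" using bb by (metis bij_pointE)
      then have "l \<bullet> l = x \<bullet> c l" by (simp add: adj)
      then show "l = 0" using \<open>c l = 0\<close> by simp
    qed
    have sc: "surj c" using lc ic by (simp add: linear_injective_imp_surjective)
    have Fcl: "F (c l) = F l" for l unfolding F_def c_def by (rule F_aut[OF bil ga])
    have cK: "c ` K = K"
    proof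
      show "c ` K \<subseteq> K" by (auto simp: K_def Fcl)
      show "K \<subseteq> c ` K"
      proof
        fix l assume "l \<in> K"
        obtain w where "l = c w" using sc by (metis surjD)
        then show "l \<in> c ` K" using \<open>l \<in> K\<close> by (auto simp: K_def Fcl)
      qed
    qed
    have vol: "integral K (\<lambda>_. 1::real) > 0"
      by (rule integral_pos[where h="\<lambda>_. 1::real" and z=0, OF _ compK _ open_ball ballK]) (simp_all add: r(1))
    have "integral K (\<lambda>_. 1::real) = \<bar>det (matrix c)\<bar> * integral K ((\<lambda>_. 1::real) \<circ> c)"
      by (rule cov_inv[OF lc cK compK]) simp
    then have d1: "\<bar>det (matrix c)\<bar> = 1" using vol by (simp add: o_def)
    show ?thesis
    proof (intro allI)
      fix x y
      have "Q (b x) (b y) = integral K ((\<lambda>\<eta>. (x \<bullet> \<eta>) * (y \<bullet> \<eta>)) \<circ> c)"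
        unfolding Q_def by (simp add: o_def adj)
      also have "\<dots> = Q x y"
        unfolding Q_def using cov_inv[OF lc cK compK, of "\<lambda>\<eta>. (x \<bullet> \<eta>) * (y \<bullet> \<eta>)"] d1
        by (simp add: continuous_intros)
      finally show "Q (b x) (b y) = Q x y" .
    qed
  qed
  show ?thesis using pd inv by blast
qed

typedef 'a ocopy = "{..<max 1 CARD('a)} :: nat set"
  by (rule exI[of _ 0]) simp

instantiation ocopy :: (type) linorder
begin
definition less_eq_ocopy :: "'a ocopy \<Rightarrow> 'a ocopy \<Rightarrow> bool" where
  "less_eq_ocopy x y \<longleftrightarrow> Rep_ocopy x \<le> Rep_ocopy y"
definition less_ocopy :: "'a ocopy \<Rightarrow> 'a ocopy \<Rightarrow> bool" where
  "less_ocopy x y \<longleftrightarrow> Rep_ocopy x < Rep_ocopy y"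
instance
  by standard (auto simp: less_eq_ocopy_def less_ocopy_def Rep_ocopy_inject)
end

lemma UNIV_ocopy: "(UNIV :: 'a ocopy set) = Abs_ocopy ` {..<max 1 CARD('a)}"
  by (metis type_definition.univ type_definition_ocopy)

instance ocopy :: (type) finite
  by standard (simp add: UNIV_ocopy)

lemma ocopy_induct:
  fixes P :: "'a ocopy \<Rightarrow> bool" and a :: "'a ocopy"
  assumes step: "\<And>x::'a ocopy. (\<And>y::'a ocopy. y < x \<Longrightarrow> P y) \<Longrightarrow> P x"
  shows "P a"
proof -
  have "\<forall>x::'a ocopy. Rep_ocopy x = n \<longrightarrow> P x" for n
  proof (induction n rule: less_induct)
    case (less n)
    show ?case
    proof (intro allI impI)
      fix x :: "'a ocopy" assume "Rep_ocopy x = n"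
      then show "P x" using less step by (auto simp: less_ocopy_def)
    qed
  qed
  then show "P a" by blast
qed

instance ocopy :: (type) wellorder
  by standard (rule ocopy_induct, blast)

lemma card_ocopy: "CARD('a::finite ocopy) = CARD('a)"
proof -
  have "CARD('a ocopy) = card {..<max 1 CARD('a)}"
    by (metis type_definition.card type_definition_ocopy)
  then show ?thesis by simp
qed

lemma transfer_thm:
  fixes B :: "real^'n \<Rightarrow> real^'n \<Rightarrow> real^'m" and \<phi> :: "real^'m \<Rightarrow> real^'k" and \<psi>
  assumes l\<phi>: "linear \<phi>" and l\<psi>: "linear \<psi>" and \<psi>\<phi>: "\<And>x. \<psi> (\<phi> x) = x" and \<phi>\<psi>: "\<And>y. \<phi> (\<psi> y) = y"
    and H: "\<exists>Q. pos_def_inner Q \<and>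
           (\<forall>a b. graded_aut (\<lambda>u v. \<phi> (B u v)) a b \<longrightarrow> (\<forall>x y. Q (b x) (b y) = Q x y))"
  shows "\<exists>Q. pos_def_inner Q \<and>
           (\<forall>a b. graded_aut B a b \<longrightarrow> (\<forall>x y. Q (b x) (b y) = Q x y))"
proof -
  obtain Q' where Q': "pos_def_inner Q'"
    "\<forall>a b. graded_aut (\<lambda>u v. \<phi> (B u v)) a b \<longrightarrow> (\<forall>x y. Q' (b x) (b y) = Q' x y)"
    using H by blast
  define Q where "Q = (\<lambda>x y. Q' (\<phi> x) (\<phi> y))"
  have bQ': "bilinear Q'" and sQ': "\<And>x y. Q' x y = Q' y x" and pQ': "\<And>x. x \<noteq> 0 \<Longrightarrow> Q' x x > 0"
    using Q'(1) unfolding pos_def_inner_def by blast+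
  have "pos_def_inner Q"
    unfolding pos_def_inner_def
  proof (intro conjI allI impI)
    show "bilinear Q" unfolding Q_def bilinear_def
    proof (intro allI conjI)
      fix y
      have "linear (\<lambda>x. Q' x (\<phi> y))" using bQ' by (simp add: bilinear_def)
      then show "linear (\<lambda>x. Q' (\<phi> x) (\<phi> y))" using linear_compose[OF l\<phi>] by (simp add: o_def)
    next
      fix x
      have "linear (\<lambda>y. Q' (\<phi> x) y)" using bQ' by (simp add: bilinear_def)
      then show "linear (\<lambda>y. Q' (\<phi> x) (\<phi> y))" using linear_compose[OF l\<phi>] by (simp add: o_def)
    qed
    fix x y show "Q x y = Q y x" unfolding Q_def by (rule sQ')
  next
    fix x :: "real^'m" assume "x \<noteq> 0"
    then have "\<phi> x \<noteq> 0" by (metis \<psi>\<phi> l\<psi> linear_0)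
    then show "Q x x > 0" unfolding Q_def by (rule pQ')
  qed
  moreover have "\<forall>x y. Q (b x) (b y) = Q x y" if ga: "graded_aut B a b" for a b
  proof -
    define b' where "b' = \<phi> \<circ> b \<circ> \<psi>"
    have la: "linear a" "det (matrix a) = 1" and lb: "linear b" "bij b"
      and hb: "\<And>u v. b (B u v) = B (a u) (a v)"
      using ga unfolding graded_aut_def by blast+
    have "linear b'" unfolding b'_def by (intro linear_compose l\<phi> l\<psi> lb(1))
    moreover have "bij b'"
    proof -
      have "bij \<phi>" by (metis \<phi>\<psi> \<psi>\<phi> bij_def inj_def surj_def)
      moreover have "bij \<psi>" by (metis \<phi>\<psi> \<psi>\<phi> bij_def inj_def surj_def)
      ultimately show ?thesis unfolding b'_def using lb(2) by (intro bij_comp)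
    qed
    moreover have "b' (\<phi> (B u v)) = \<phi> (B (a u) (a v))" for u v
      by (simp add: b'_def \<psi>\<phi> hb)
    ultimately have "graded_aut (\<lambda>u v. \<phi> (B u v)) a b'"
      unfolding graded_aut_def using la by blast
    then have inv: "\<forall>x y. Q' (b' x) (b' y) = Q' x y" using Q'(2) by blast
    have bb: "b' (\<phi> x) = \<phi> (b x)" for x by (simp add: b'_def \<psi>\<phi>)
    show ?thesis unfolding Q_def using inv by (metis bb)
  qed
  ultimately show ?thesis by blast
qed

lemma transfer_tsb:
  assumes "two_step_bracket B" "linear \<phi>"
  shows "two_step_bracket (\<lambda>u v. \<phi> (B u v))"
proof -
  have bil: "bilinear B" and anti: "\<And>u v. B u v = - B v u"
    using assms(1) unfolding two_step_bracket_def by blast+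
  have "bilinear (\<lambda>u v. \<phi> (B u v))" unfolding bilinear_def
  proof (intro allI conjI)
    fix y
    have "linear (\<lambda>x. B x y)" using bil by (simp add: bilinear_def)
    then show "linear (\<lambda>x. \<phi> (B x y))" using linear_compose[OF _ assms(2)] by (simp add: o_def)
  next
    fix x
    have "linear (\<lambda>y. B x y)" using bil by (simp add: bilinear_def)
    then show "linear (\<lambda>y. \<phi> (B x y))" using linear_compose[OF _ assms(2)] by (simp add: o_def)
  qed
  moreover have "\<phi> (B u v) = - \<phi> (B v u)" for u v
    using anti[of u v] linear_neg[OF assms(2)] by metis
  ultimately show ?thesis unfolding two_step_bracket_def by blast
qed

lemma transfer_fat:
  assumes "fat B" "linear \<phi>" "\<And>y. \<phi> (\<psi> y) = y"
  shows "fat (\<lambda>u v. \<phi> (B u v))"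
  unfolding fat_def
proof (intro allI impI)
  fix l :: "_ \<Rightarrow> real" and u
  assume l: "linear l \<and> l \<noteq> (\<lambda>_. 0)" and h: "\<forall>v. l (\<phi> (B u v)) = 0"
  have "linear (l \<circ> \<phi>)" using l assms(2) by (intro linear_compose) auto
  moreover have "(l \<circ> \<phi>) \<noteq> (\<lambda>_. 0)"
  proof
    assume "l \<circ> \<phi> = (\<lambda>_. 0)"
    then have "l y = 0" for y by (metis assms(3) comp_apply)
    then show False using l by auto
  qed
  moreover have "linear (l \<circ> \<phi>) \<and> (l \<circ> \<phi>) \<noteq> (\<lambda>_. 0) \<longrightarrow>
      (\<forall>u. (\<forall>v. (l \<circ> \<phi>) (B u v) = 0) \<longrightarrow> u = 0)"
    using spec[OF assms(1)[unfolded fat_def], of "l \<circ> \<phi>"] .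
  ultimately have "\<forall>u. (\<forall>v. (l \<circ> \<phi>) (B u v) = 0) \<longrightarrow> u = 0"
    by blast
  then show "u = 0" using h by simp
qed

theorem theorem2p1:
  fixes B :: "real^'n \<Rightarrow> real^'n \<Rightarrow> real^'m"
  assumes "two_step_bracket B" and "fat B"
  shows "\<exists>Q. pos_def_inner Q \<and>
           (\<forall>a b. graded_aut B a b \<longrightarrow> (\<forall>x y. Q (b x) (b y) = Q x y))"
proof -
  have "card (UNIV :: 'm ocopy set) = card (UNIV :: 'm set)" by (rule card_ocopy)
  then obtain e :: "'m ocopy \<Rightarrow> 'm" where "bij_betw e UNIV UNIV"
    using finite_same_card_bij[of "UNIV :: 'm ocopy set" "UNIV :: 'm set"] by auto
  then have e: "bij e" by (simp add: bij_betw_def bij_def)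
  define \<phi> where "\<phi> = (\<lambda>x::real^'m. (\<chi> j. x $ e j) :: real^'m ocopy)"
  define \<psi> where "\<psi> = (\<lambda>y::real^'m ocopy. (\<chi> i. y $ inv e i) :: real^'m)"
  have l\<phi>: "linear \<phi>" unfolding \<phi>_def by (rule linearI) (simp_all add: vec_eq_iff)
  have l\<psi>: "linear \<psi>" unfolding \<psi>_def by (rule linearI) (simp_all add: vec_eq_iff)
  have \<psi>\<phi>: "\<psi> (\<phi> x) = x" for x
    unfolding \<phi>_def \<psi>_def by (simp add: vec_eq_iff surj_f_inv_f[OF bij_is_surj[OF e]])
  have \<phi>\<psi>: "\<phi> (\<psi> y) = y" for y
    unfolding \<phi>_def \<psi>_def using e by (simp add: vec_eq_iff bij_is_inj)
  have t: "two_step_bracket (\<lambda>u v. \<phi> (B u v))" by (rule transfer_tsb[OF assms(1) l\<phi>])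
  have f: "fat (\<lambda>u v. \<phi> (B u v))" by (rule transfer_fat[OF assms(2) l\<phi> \<phi>\<psi>])
  show ?thesis
    by (rule transfer_thm[OF l\<phi> l\<psi> \<psi>\<phi> \<phi>\<psi> main_wo[OF t f]])
qed

end
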